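(* Let $\alpha,\beta,\gamma,\alpha',\beta',\gamma'\in\mathbb C$ with $\beta\beta'\neq0$ and $\alpha/\beta=\alpha'/\beta'+1$, and let $G(t,z)$ be the EGF of the GKP triangle $\left[\begin{array}{cc|c}\alpha,&\beta&\gamma\\ \alpha',&\beta'&\gamma'\end{array}\right]$. Put $\rho=\beta/(\beta+\beta't)$. If $\alpha\neq0$ then near $(0,0)$ $$G(t,z)=\Bigl\{1-\rho\bigl[1-(1-\alpha z/\rho)^{\beta/\alpha}\bigr]\Bigr\}^{-\gamma/\beta}\Bigl\{1-\tfrac{\beta't}{\beta+\beta't}\bigl[1-(1-\alpha z/\rho)^{-\beta/\alpha}\bigr]\Bigr\}^{\gamma'/\beta'},$$ and if $\alpha=0$ (i.e. $\alpha'=-\beta'$) then $$G(t,z)=\Bigl\{1-\rho\bigl[1-e^{-z(\beta+\beta't)}\bigr]\Bigr\}^{-\gamma/\beta}\Bigl\{1-\tfrac{\beta't}{\beta+\beta't}\bigl[1-e^{z(\beta+\beta't)}\bigr]\Bigr\}^{\gamma'/\beta'},$$ all powers being principal branches equal to $1$ at $z=0$.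
   Context: GKP triangle: for complex parameters $\alpha,\beta,\gamma,\alpha',\beta',\gamma'$, the array $T_{n,k}=\left[\begin{array}{cc|c}\alpha,&\beta&\gamma\\ \alpha',&\beta'&\gamma'\end{array}\right]_{n,k}$ is defined by $T_{0,0}=1$, $T_{n,k}=0$ if $n<0$, $k<0$ or $k>n$, and $T_{n+1,k+1}=[\alpha n+\beta(k+1)+\gamma]T_{n,k+1}+[\alpha' n+\beta' k+\gamma']T_{n,k}$ for $n\ge0$, $k\in\mathbb Z$; its EGF is $G(t,z)=\sum_{n\ge0}\sum_{k=0}^nT_{n,k}t^kz^n/n!$. *)

theory Defs
  imports "HOL-Analysis.Analysis"
begin

text \<open>GKP triangle T(n,k) with parameters a b c a' b' c' (alpha, beta, gamma, alpha', beta', gamma').\<close>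

fun gkp :: "complex \<Rightarrow> complex \<Rightarrow> complex \<Rightarrow> complex \<Rightarrow> complex \<Rightarrow> complex \<Rightarrow> nat \<Rightarrow> int \<Rightarrow> complex" where
  "gkp a b c a' b' c' 0 k = (if k = 0 then 1 else 0)"
| "gkp a b c a' b' c' (Suc n) k =
     (if k < 0 \<or> k > int (Suc n) then 0
      else (a * of_nat n + b * of_int k + c) * gkp a b c a' b' c' n k
         + (a' * of_nat n + b' * of_int (k - 1) + c') * gkp a b c a' b' c' n (k - 1))"

definition gkp_egf_term :: "complex \<Rightarrow> complex \<Rightarrow> complex \<Rightarrow> complex \<Rightarrow> complex \<Rightarrow> complex \<Rightarrow> complex \<Rightarrow> complex \<Rightarrow> nat \<Rightarrow> complex" where
  "gkp_egf_term a b c a' b' c' t z n =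
     (\<Sum>k\<le>n. gkp a b c a' b' c' n (int k) * t ^ k) * z ^ n / of_nat (fact n)"

end

theory Submission
  imports Defs "HOL-Complex_Analysis.Complex_Analysis"
begin

fun Dc :: "complex \<Rightarrow> complex \<Rightarrow> complex \<Rightarrow> nat \<Rightarrow> nat \<Rightarrow> complex" where
  "Dc l p q j 0 = (if j = 0 then 1 else 0)"
| "Dc l p q j (Suc n) = (l * of_nat n - of_nat j - q) * Dc l p q j n
     + (if j = 0 then 0 else (of_nat j - 1 - p) * Dc l p q (j - 1) n)"

lemma Dc_zero: "n < j \<Longrightarrow> Dc l p q j n = 0"
  by (induction n arbitrary: j) auto

lemma gkp_out: "k < 0 \<or> k > int n \<Longrightarrow> gkp a b c a' b' c' n k = 0"
  by (cases n) auto

definition Pn where "Pn a b c a' b' c' n t = (\<Sum>k\<le>n. gkp a b c a' b' c' n (int k) * t ^ k)"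

lemma Pn_Suc:
  "Pn a b c a' b' c' (Suc n) t = (a * of_nat n + c + t * (a' * of_nat n + c')) * Pn a b c a' b' c' n t
     + (b + b' * t) * (\<Sum>k\<le>n. of_nat k * gkp a b c a' b' c' n (int k) * t ^ k)"
proof -
  let ?T = "gkp a b c a' b' c' n"
  define A where "A k = (a * of_nat n + b * of_nat k + c) * ?T (int k) * t ^ k" for k :: nat
  define B where "B k = (a' * of_nat n + b' * (of_int (int k - 1)) + c') * ?T (int k - 1) * t ^ k" for k :: nat
  have "Pn a b c a' b' c' (Suc n) t = (\<Sum>k\<le>Suc n. A k + B k)"
    unfolding Pn_def A_def B_def by (intro sum.cong) (auto simp: algebra_simps)
  also have "\<dots> = (\<Sum>k\<le>Suc n. A k) + (\<Sum>k\<le>Suc n. B k)" by (rule sum.distrib)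
  also have "(\<Sum>k\<le>Suc n. A k) = (\<Sum>k\<le>n. A k)"
    by (simp add: A_def gkp_out)
  also have "(\<Sum>k\<le>Suc n. B k) = (\<Sum>k\<le>n. B (Suc k))"
    by (subst sum.atMost_Suc_shift) (simp add: B_def gkp_out)
  also have "(\<Sum>k\<le>n. A k) + (\<Sum>k\<le>n. B (Suc k)) = (\<Sum>k\<le>n. A k + B (Suc k))"
    by (rule sum.distrib[symmetric])
  also have "\<dots> = (\<Sum>k\<le>n. (a * of_nat n + c + t * (a' * of_nat n + c')) * (?T (int k) * t ^ k)
     + (b + b' * t) * (of_nat k * ?T (int k) * t ^ k))"
    by (intro sum.cong) (auto simp: A_def B_def algebra_simps)
  also have "\<dots> = (a * of_nat n + c + t * (a' * of_nat n + c')) * Pn a b c a' b' c' n t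
     + (b + b' * t) * (\<Sum>k\<le>n. of_nat k * ?T (int k) * t ^ k)"
    by (simp add: Pn_def sum.distrib sum_distrib_left)
  finally show ?thesis .
qed

lemma Pn_deriv:
  "(Pn a b c a' b' c' n has_field_derivative (\<Sum>k\<le>n. gkp a b c a' b' c' n (int k) * (of_nat k * t ^ (k - 1)))) (at t)"
  unfolding Pn_def[abs_def]
  by (auto intro!: derivative_eq_intros sum.cong simp: mult_ac)

lemma times_pow_pred: "t * (of_nat k * t ^ (k - 1)) = of_nat k * (t::complex) ^ k"
  by (cases k) auto

definition Qn where "Qn l p q b b' n t = (\<Sum>j\<le>n. Dc l p q j n * b ^ j * (b + b' * t) ^ (n - j))"

lemma Qn_deriv:
  "(Qn l p q b b' n has_field_derivative (\<Sum>j\<le>n. Dc l p q j n * b ^ j * (of_nat (n - j) * (b + b' * t) ^ (n - j - 1) * b'))) (at t)"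
  unfolding Qn_def[abs_def]
  by (auto intro!: derivative_eq_intros sum.cong simp: mult_ac)


lemma key_scalar:
  fixes a b c a' b' c' t :: complex and n i :: nat
  assumes "b * b' \<noteq> 0" "a / b = a' / b' + 1" "i \<le> n"
  shows "(a / b * of_nat n - of_nat i - (- c' / b')) * (b + b' * t) + (of_nat i - (c' / b' - c / b)) * b
       = a * of_nat n + c + t * (a' * of_nat n + c') + t * b' * of_nat (n - i)"
proof -
  have b: "b \<noteq> 0" and b': "b' \<noteq> 0" using assms by auto
  define l C C' where "l = a / b" and "C = c / b" and "C' = c' / b'"
  have a: "a = l * b" and c: "c = C * b" and c': "c' = C' * b'" and a': "a' = l * b' - b'"
    using b b' assms(2) by (auto simp: l_def C_def C'_def field_simps)
  have "(a / b * of_nat n - of_nat i - (- c' / b')) * (b + b' * t) + (of_nat i - (c' / b' - c / b)) * b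
     = (l * of_nat n - of_nat i + C') * (b + b' * t) + (of_nat i - (C' - C)) * b"
    by (simp add: l_def C_def C'_def)
  also have "\<dots> = a * of_nat n + c + t * (a' * of_nat n + c') + t * b' * (of_nat n - of_nat i)"
    unfolding a c c' a' by (simp add: algebra_simps)
  finally show ?thesis using assms(3) by (simp add: of_nat_diff)
qed

lemma Pn_Qn:
  assumes "b * b' \<noteq> 0" "a / b = a' / b' + 1"
  shows "Pn a b c a' b' c' n t = Qn (a/b) (c'/b' - c/b) (- c'/b') b b' n t"
proof (induction n arbitrary: t)
  case 0
  show ?case by (simp add: Pn_def Qn_def)
next
  case (Suc n)
  define l p q where "l = a/b" and "p = c'/b' - c/b" and "q = - c'/b'"
  define s where "s = b + b' * t"
  have IH: "Pn a b c a' b' c' n = Qn l p q b b' n" using Suc by (auto simp: l_def p_def q_def)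
  have D: "(\<Sum>k\<le>n. gkp a b c a' b' c' n (int k) * (of_nat k * t ^ (k - 1)))
      = (\<Sum>j\<le>n. Dc l p q j n * b ^ j * (of_nat (n - j) * (b + b' * t) ^ (n - j - 1) * b'))"
    using Pn_deriv[of a b c a' b' c' n t] Qn_deriv[of l p q b b' n t] unfolding IH
    by (rule DERIV_unique)
  have "(\<Sum>k\<le>n. of_nat k * gkp a b c a' b' c' n (int k) * t ^ k)
      = t * (\<Sum>k\<le>n. gkp a b c a' b' c' n (int k) * (of_nat k * t ^ (k - 1)))"
    unfolding sum_distrib_left
  proof (intro sum.cong refl)
    fix k assume "k \<in> {..n}"
    show "of_nat k * gkp a b c a' b' c' n (int k) * t ^ k = t * (gkp a b c a' b' c' n (int k) * (of_nat k * t ^ (k - 1)))"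
      using times_pow_pred[of t k] by (metis (no_types, lifting) mult.assoc mult.left_commute)
  qed
  also note D
  finally have E0: "(\<Sum>k\<le>n. of_nat k * gkp a b c a' b' c' n (int k) * t ^ k) = t * (\<Sum>j\<le>n. Dc l p q j n * b ^ j * (of_nat (n - j) * (b + b' * t) ^ (n - j - 1) * b'))" .
  have E1: "s * (t * (\<Sum>j\<le>n. Dc l p q j n * b ^ j * (of_nat (n - j) * (b + b' * t) ^ (n - j - 1) * b')))
      = (\<Sum>j\<le>n. Dc l p q j n * b ^ j * s ^ (n - j) * (t * b' * of_nat (n - j)))"
    unfolding sum_distrib_left s_def
  proof (intro sum.cong refl)
    fix j assume "j \<in> {..n}"
    show "(b + b' * t) * (t * (Dc l p q j n * b ^ j * (of_nat (n - j) * (b + b' * t) ^ (n - j - 1) * b'))) =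
         Dc l p q j n * b ^ j * (b + b' * t) ^ (n - j) * (t * b' * of_nat (n - j))"
      by (cases "n - j") (auto simp: algebra_simps)
  qed
  have E: "s * (\<Sum>k\<le>n. of_nat k * gkp a b c a' b' c' n (int k) * t ^ k)
      = (\<Sum>j\<le>n. Dc l p q j n * b ^ j * s ^ (n - j) * (t * b' * of_nat (n - j)))"
    using E0 E1 by simp
  have "Pn a b c a' b' c' (Suc n) t = (a * of_nat n + c + t * (a' * of_nat n + c')) * Qn l p q b b' n t
     + (\<Sum>j\<le>n. Dc l p q j n * b ^ j * s ^ (n - j) * (t * b' * of_nat (n - j)))"
    using Pn_Suc[of a b c a' b' c' n t] E IH by (simp add: s_def)
  also have "\<dots> = (\<Sum>j\<le>n. Dc l p q j n * b ^ j * s ^ (n - j) *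
       (a * of_nat n + c + t * (a' * of_nat n + c') + t * b' * of_nat (n - j)))"
    by (simp add: Qn_def sum_distrib_left sum.distrib[symmetric] s_def algebra_simps)
  also have "\<dots> = (\<Sum>j\<le>n. Dc l p q j n * b ^ j * s ^ (n - j) *
       ((l * of_nat n - of_nat j - q) * s + (of_nat j - p) * b))"
  proof (intro sum.cong refl)
    fix j assume "j \<in> {..n}" then have jn: "j \<le> n" by simp
    have k: "(l * of_nat n - of_nat j - q) * s + (of_nat j - p) * b = 
       a * of_nat n + c + t * (a' * of_nat n + c') + t * b' * of_nat (n - j)"
      unfolding l_def p_def q_def s_def by (rule key_scalar[OF assms(1,2) jn])
    show "Dc l p q j n * b ^ j * s ^ (n - j) *
       (a * of_nat n + c + t * (a' * of_nat n + c') + t * b' * of_nat (n - j)) = Dc l p q j n * b ^ j * s ^ (n - j) *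
       ((l * of_nat n - of_nat j - q) * s + (of_nat j - p) * b)" by (simp only: k)
  qed
  also have "\<dots> = (\<Sum>j\<le>n. (l * of_nat n - of_nat j - q) * Dc l p q j n * b ^ j * s ^ (Suc n - j))
        + (\<Sum>j\<le>n. (of_nat (Suc j) - 1 - p) * Dc l p q j n * b ^ (Suc j) * s ^ (Suc n - Suc j))"
    by (simp add: sum.distrib[symmetric] Suc_diff_le algebra_simps)
  also have "(\<Sum>j\<le>n. (l * of_nat n - of_nat j - q) * Dc l p q j n * b ^ j * s ^ (Suc n - j))
      = (\<Sum>j\<le>Suc n. (l * of_nat n - of_nat j - q) * Dc l p q j n * b ^ j * s ^ (Suc n - j))"
    by (simp add: Dc_zero)
  also have "(\<Sum>j\<le>n. (of_nat (Suc j) - 1 - p) * Dc l p q j n * b ^ (Suc j) * s ^ (Suc n - Suc j))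
      = (\<Sum>j\<le>Suc n. (if j = 0 then 0 else (of_nat j - 1 - p) * Dc l p q (j - 1) n) * b ^ j * s ^ (Suc n - j))"
    by (subst sum.atMost_Suc_shift) simp
  also have "(\<Sum>j\<le>Suc n. (l * of_nat n - of_nat j - q) * Dc l p q j n * b ^ j * s ^ (Suc n - j))
      + (\<Sum>j\<le>Suc n. (if j = 0 then 0 else (of_nat j - 1 - p) * Dc l p q (j - 1) n) * b ^ j * s ^ (Suc n - j))
      = Qn l p q b b' (Suc n) t"
    by (simp add: Qn_def sum.distrib[symmetric] s_def algebra_simps)
  finally show ?case by (simp add: l_def p_def q_def)
qed

lemma Dc_bound:
  fixes l p q :: complex
  defines "K \<equiv> 2 * (norm l + norm p + norm q + 1)"
  shows "norm (Dc l p q j n) \<le> K ^ n * fact n"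
proof (induction n arbitrary: j)
  case 0 show ?case by auto
next
  case (Suc n)
  define K' where "K' = norm l + norm p + norm q + 1"
  have K: "K = 2 * K'" by (simp add: K_def K'_def)
  have K'0: "K' \<ge> 1" by (simp add: K'_def)
  show ?case
  proof (cases "j \<le> Suc n")
    case False
    have "K \<ge> 0" by (simp add: K_def add_nonneg_nonneg)
    with False show ?thesis by (simp add: Dc_zero)
  next
    case True
    have c1: "norm (l * of_nat n - of_nat j - q) \<le> (n + 1) * K'"
    proof -
      have "norm (l * of_nat n - of_nat j - q) \<le> norm (l * of_nat n - of_nat j) + norm q"
        by (rule norm_triangle_ineq4)
      also have "norm (l * of_nat n - of_nat j) \<le> norm (l * of_nat n) + norm (of_nat j :: complex)"
        by (rule norm_triangle_ineq4)
      finally have 1: "norm (l * of_nat n - of_nat j - q) \<le> norm l * n + j + norm q"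
        by (simp add: norm_mult)
      have 2: "norm l * n \<le> norm l * (n+1)" by (simp add: mult_left_mono)
      have 3: "norm q \<le> (n+1) * norm q" by (simp add: mult_le_cancel_right1)
      have 4: "0 \<le> (n+1) * norm p" by simp
      have 5: "real j \<le> n + 1" using True by linarith
      have 6: "(n + 1) * K' = norm l * (n+1) + (n+1) * norm p + (n+1) * norm q + (n+1)"
        by (simp add: K'_def algebra_simps)
      show ?thesis using 1 2 3 4 5 6 by linarith
    qed
    have c2: "j > 0 \<Longrightarrow> norm (of_nat j - 1 - p) \<le> (n + 1) * K'"
    proof -
      assume "j > 0"
      then have "of_nat j - 1 - p = of_nat (j - 1) - (p::complex)" by (simp add: of_nat_diff)
      then have 1: "norm (of_nat j - 1 - p) \<le> real (j - 1) + norm p"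
        using norm_triangle_ineq4[of "of_nat (j - 1) :: complex" p] by simp
      have 5: "real (j - 1) \<le> n + 1" using True by linarith
      have 3: "norm p \<le> (n+1) * norm p" by (simp add: mult_le_cancel_right1)
      have 4: "0 \<le> (n+1) * norm q" "0 \<le> norm l * (n+1)" by simp_all
      have 6: "(n + 1) * K' = norm l * (n+1) + (n+1) * norm p + (n+1) * norm q + (n+1)"
        by (simp add: K'_def algebra_simps)
      show ?thesis using 1 3 4 5 6 by linarith
    qed
    have K0: "K \<ge> 0" by (simp add: K_def add_nonneg_nonneg)
    have b1: "norm ((l * of_nat n - of_nat j - q) * Dc l p q j n) \<le> (n+1) * K' * (K ^ n * fact n)"
      unfolding norm_mult by (rule mult_mono[OF c1 Suc.IH]) (use K'0 in auto)
    have b2: "norm (if j = 0 then 0 else (of_nat j - 1 - p) * Dc l p q (j - 1) n) \<le> (n+1) * K' * (K ^ n * fact n)"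
    proof (cases "j = 0")
      case True then show ?thesis using K'0 K0 by simp
    next
      case False
      then show ?thesis unfolding norm_mult if_not_P[OF False]
        by (intro mult_mono[OF c2 Suc.IH]) (use K'0 in auto)
    qed
    have "norm (Dc l p q j (Suc n)) \<le> (n+1) * K' * (K ^ n * fact n) + (n+1) * K' * (K ^ n * fact n)"
      unfolding Dc.simps by (rule order_trans[OF norm_triangle_ineq add_mono[OF b1 b2]])
    also have "\<dots> = K ^ Suc n * fact (Suc n)" by (simp add: K algebra_simps)
    finally show ?thesis .
  qed
qed

definition Ej :: "complex \<Rightarrow> complex \<Rightarrow> (complex \<Rightarrow> complex) \<Rightarrow> nat \<Rightarrow> complex \<Rightarrow> complex" where
  "Ej p q W j y = (p gchoose j) * (W y - 1) ^ j * W y powr q"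

lemma near1_not_nonpos: "norm (w - 1) < 1/2 \<Longrightarrow> (w::complex) \<notin> \<real>\<^sub>\<le>\<^sub>0"
proof
  assume "norm (w - 1) < 1/2" "w \<in> \<real>\<^sub>\<le>\<^sub>0"
  then have "Re w \<le> 0" by (simp add: complex_nonpos_Reals_iff)
  moreover have "abs (Re (w - 1)) \<le> norm (w - 1)" by (rule abs_Re_le_cmod)
  ultimately show False using \<open>norm (w - 1) < 1/2\<close> by simp
qed

lemma powr_pred_mult: "(w::complex) \<noteq> 0 \<Longrightarrow> w powr (q - 1) * w = w powr q"
  by (simp add: powr_def exp_diff field_simps)

lemma gchoose_rel: "j > 0 \<Longrightarrow> - of_nat j * (p gchoose j) = (of_nat j - 1 - p) * ((p::complex) gchoose (j - 1))"
proof -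
  assume "j > 0"
  then obtain k where j: "j = Suc k" by (cases j) auto
  have "p * (p gchoose k) = of_nat k * (p gchoose k) + of_nat (Suc k) * (p gchoose (Suc k))"
    by (rule gbinomial_mult_1)
  then show ?thesis unfolding j by (simp add: algebra_simps)
qed

locale Wsetup =
  fixes l p q :: complex and W :: "complex \<Rightarrow> complex" and R :: real
  assumes R: "R > 0"
    and holo: "W holomorphic_on ball 0 R"
    and W0: "W 0 = 1"
    and near: "\<And>y. y \<in> ball 0 R \<Longrightarrow> norm (W y - 1) < 1/2"
    and ode: "\<And>y. y \<in> ball 0 R \<Longrightarrow> (1 - l * y) * deriv W y = - W y"
begin

lemma Ej_holo: "Ej p q W j holomorphic_on ball 0 R"
  unfolding Ej_def[abs_def]
  by (intro holomorphic_intros holo) (use near near1_not_nonpos in blast)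

lemma Ej_ode:
  assumes y: "y \<in> ball 0 R"
  shows "(1 - l * y) * deriv (Ej p q W j) y
       = - (of_nat j + q) * Ej p q W j y + (if j = 0 then 0 else (of_nat j - 1 - p) * Ej p q W (j - 1) y)"
proof -
  define w' where "w' = deriv W y"
  have dW: "(W has_field_derivative w') (at y)"
    unfolding w'_def using holo y by (intro holomorphic_derivI[of W "ball 0 R"]) auto
  have nn: "W y \<notin> \<real>\<^sub>\<le>\<^sub>0" by (rule near1_not_nonpos[OF near[OF y]])
  then have W0: "W y \<noteq> 0" by auto
  have dP: "((\<lambda>y. W y powr q) has_field_derivative (q * W y powr (q - 1) * w')) (at y)"
    using DERIV_chain2[OF has_field_derivative_powr[OF nn, of q] dW] by simp
  have dE: "(Ej p q W j has_field_derivative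
      (p gchoose j) * (of_nat j * (W y - 1) ^ (j - 1) * w' * W y powr q + (W y - 1) ^ j * (q * W y powr (q - 1) * w'))) (at y)"
    unfolding Ej_def[abs_def]
    using nn by (auto intro!: derivative_eq_intros dW dP simp: algebra_simps)
  have "(1 - l * y) * deriv (Ej p q W j) y
      = (p gchoose j) * (of_nat j * (W y - 1) ^ (j - 1) * ((1 - l * y) * w') * W y powr q
         + (W y - 1) ^ j * (q * W y powr (q - 1) * ((1 - l * y) * w')))"
    using DERIV_imp_deriv[OF dE] by (simp add: algebra_simps)
  also have "\<dots> = - (p gchoose j) * (of_nat j * (W y - 1) ^ (j - 1) * W y * W y powr q
         + q * (W y - 1) ^ j * (W y powr (q - 1) * W y))"
  proof -
    have o: "(1 - l * y) * w' = - W y" using ode[OF y] unfolding w'_def .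
    show ?thesis unfolding o by (simp add: algebra_simps)
  qed
  also have "\<dots> = - (p gchoose j) * (of_nat j * (W y - 1) ^ (j - 1) * W y * W y powr q
         + q * (W y - 1) ^ j * W y powr q)"
    using powr_pred_mult[OF W0] by simp
  also have "\<dots> = - (of_nat j + q) * Ej p q W j y + (if j = 0 then 0 else (of_nat j - 1 - p) * Ej p q W (j - 1) y)"
  proof (cases j)
    case 0 then show ?thesis by (simp add: Ej_def)
  next
    case (Suc k)
    have "(W y - 1) ^ (j - 1) * W y = (W y - 1) ^ j + (W y - 1) ^ (j - 1)"
      unfolding Suc by (simp add: algebra_simps)
    then have "- (p gchoose j) * (of_nat j * (W y - 1) ^ (j - 1) * W y * W y powr q + q * (W y - 1) ^ j * W y powr q)
       = - (of_nat j + q) * Ej p q W j y + (- of_nat j * (p gchoose j)) * (W y - 1) ^ (j - 1) * W y powr q"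
      unfolding Ej_def by (simp add: algebra_simps)
    also have "- of_nat j * (p gchoose j) = (of_nat j - 1 - p) * (p gchoose (j - 1))"
      using gchoose_rel[of j p] Suc by simp
    finally show ?thesis using Suc by (simp add: Ej_def algebra_simps)
  qed
  finally show ?thesis .
qed

lemma Ej_has_fps: "Ej p q W j has_fps_expansion fps_expansion (Ej p q W j) 0"
  by (rule has_fps_expansion_fps_expansion[OF open_ball _ Ej_holo]) (use R in simp)

lemma Ej_fps_step:
  assumes IH: "j > 0 \<Longrightarrow> fps_expansion (Ej p q W (j - 1)) 0 = Abs_fps (\<lambda>n. Dc l p q (j - 1) n / fact n)"
  shows "fps_expansion (Ej p q W j) 0 = Abs_fps (\<lambda>n. Dc l p q j n / fact n)"
proof -
  define F where "F = fps_expansion (Ej p q W j) 0"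
  have hE: "Ej p q W j has_fps_expansion F" unfolding F_def by (rule Ej_has_fps)
  define H where "H = (if j = 0 then 0 else fps_const (of_nat j - 1 - p) * Abs_fps (\<lambda>n. Dc l p q (j - 1) n / fact n))"
  define f2 where "f2 y = - (of_nat j + q) * Ej p q W j y + (if j = 0 then 0 else (of_nat j - 1 - p) * Ej p q W (j - 1) y)" for y
  have h1: "(\<lambda>y. (1 - l * y) * deriv (Ej p q W j) y) has_fps_expansion (1 - fps_const l * fps_X) * fps_deriv F"
    by (intro fps_expansion_intros hE)
  have h2: "f2 has_fps_expansion fps_const (- (of_nat j + q)) * F + H"
  proof (cases "j = 0")
    case True
    have "(\<lambda>y. (- (of_nat j + q)) * Ej p q W j y) has_fps_expansion fps_const (- (of_nat j + q)) * F"
      by (rule has_fps_expansion_cmult_left[OF hE])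
    then show ?thesis unfolding f2_def H_def using True by simp
  next
    case False
    have "Ej p q W (j - 1) has_fps_expansion Abs_fps (\<lambda>n. Dc l p q (j - 1) n / fact n)"
      using Ej_has_fps[of "j - 1"] IH False by simp
    with False show ?thesis unfolding f2_def H_def by (auto intro!: fps_expansion_intros hE)
  qed
  have ev: "eventually (\<lambda>y. (1 - l * y) * deriv (Ej p q W j) y = f2 y) (nhds 0)"
  proof -
    have "eventually (\<lambda>y. y \<in> ball 0 R) (nhds (0::complex))"
      using R by (intro eventually_nhds_in_open) auto
    then show ?thesis by eventually_elim (simp add: Ej_ode f2_def)
  qed
  have EQ: "(1 - fps_const l * fps_X) * fps_deriv F = fps_const (- (of_nat j + q)) * F + H"
  proof (rule eval_fps_eqD)
    show "fps_conv_radius ((1 - fps_const l * fps_X) * fps_deriv F) > 0"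
      using h1 unfolding has_fps_expansion_def by blast
    show "fps_conv_radius (fps_const (- (of_nat j + q)) * F + H) > 0"
      using h2 unfolding has_fps_expansion_def by blast
    have e1: "eventually (\<lambda>z. eval_fps ((1 - fps_const l * fps_X) * fps_deriv F) z = (1 - l * z) * deriv (Ej p q W j) z) (nhds 0)"
      using h1 unfolding has_fps_expansion_def by blast
    have e2: "eventually (\<lambda>z. eval_fps (fps_const (- (of_nat j + q)) * F + H) z = f2 z) (nhds 0)"
      using h2 unfolding has_fps_expansion_def by blast
    show "eventually (\<lambda>z. eval_fps ((1 - fps_const l * fps_X) * fps_deriv F) z = eval_fps (fps_const (- (of_nat j + q)) * F + H) z) (nhds 0)"
      using ev e1 e2 by eventually_elim simp
  qed
  have coef: "of_nat (Suc n) * fps_nth F (Suc n) - l * of_nat n * fps_nth F n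
      = - (of_nat j + q) * fps_nth F n + (if j = 0 then 0 else (of_nat j - 1 - p) * (Dc l p q (j - 1) n / fact n))" for n
  proof -
    have "fps_nth ((1 - fps_const l * fps_X) * fps_deriv F) n = fps_nth (fps_const (- (of_nat j + q)) * F + H) n"
      by (simp only: EQ)
    moreover have "(1 - fps_const l * fps_X) * fps_deriv F = fps_deriv F - fps_const l * (fps_X * fps_deriv F)"
      by (simp add: algebra_simps)
    ultimately show ?thesis by (cases n) (auto simp: H_def algebra_simps)
  qed
  have "fps_nth F n = Dc l p q j n / fact n" for n
  proof (induction n)
    case 0
    have "fps_nth F 0 = Ej p q W j 0" using fps_nth_fps_expansion[OF hE, of 0] by simp
    then show ?case by (simp add: Ej_def W0)
  next
    case (Suc n)
    have "of_nat (Suc n) * fps_nth F (Suc n) = (l * of_nat n - of_nat j - q) * (Dc l p q j n / fact n)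
       + (if j = 0 then 0 else (of_nat j - 1 - p) * (Dc l p q (j - 1) n / fact n))"
    proof -
      have "of_nat (Suc n) * fps_nth F (Suc n) = (l * of_nat n - of_nat j - q) * fps_nth F n
       + (if j = 0 then 0 else (of_nat j - 1 - p) * (Dc l p q (j - 1) n / fact n))"
        using coef[of n] by (simp add: algebra_simps)
      then show ?thesis unfolding Suc .
    qed
    also have "\<dots> = Dc l p q j (Suc n) / fact n" by (simp add: field_simps)
    finally show ?case by (simp add: field_simps del: of_nat_Suc)
  qed
  then show ?thesis unfolding F_def[symmetric] by (intro fps_ext) simp
qed

lemma Ej_fps: "fps_expansion (Ej p q W j) 0 = Abs_fps (\<lambda>n. Dc l p q j n / fact n)"
proof (induction j)
  case 0 show ?case by (rule Ej_fps_step) simp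
next
  case (Suc j) show ?case by (rule Ej_fps_step) (use Suc in simp)
qed

lemma Ej_sums:
  assumes "y \<in> ball 0 R"
  shows "(\<lambda>n. Dc l p q j n / fact n * y ^ n) sums Ej p q W j y"
proof -
  have h: "Ej p q W j holomorphic_on eball 0 (ereal R)" using Ej_holo by simp
  have "norm y < R" using assms by simp
  then have "norm y < fps_conv_radius (fps_expansion (Ej p q W j) 0)"
  proof -
    have "ereal (norm y) < ereal R" using \<open>norm y < R\<close> by simp
    then show ?thesis using conv_radius_fps_expansion[OF h] by (rule order.strict_trans2)
  qed
  from sums_eval_fps[OF this] show ?thesis
    using eval_fps_expansion'[OF h, of y] \<open>norm y < R\<close> by (simp add: Ej_fps)
qed

end

lemma geom_row_summable:
  fixes x :: real
  assumes "0 \<le> x" "2 * x < 1"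
  shows "(\<lambda>(n::nat, j::nat). if j \<le> n then x ^ n else 0) summable_on UNIV"
proof -
  have "(\<lambda>(n::nat, j::nat). if j \<le> n then x ^ n else 0) summable_on Sigma UNIV (\<lambda>_. UNIV)"
  proof (rule summable_on_SigmaI[where g = "\<lambda>n. of_nat (Suc n) * x ^ n"])
    fix n :: nat
    show "((\<lambda>j. (\<lambda>(n, j). if j \<le> n then x ^ n else 0) (n, j)) has_sum of_nat (Suc n) * x ^ n) UNIV"
      by (rule has_sum_finite_neutralI[where B = "{..n}"]) auto
  next
    show "(\<lambda>n. of_nat (Suc n) * x ^ n) summable_on UNIV"
    proof (rule summable_on_comparison_test)
      have "(\<lambda>n. (2 * x) ^ n) sums (1 / (1 - 2 * x))"
        using geometric_sums[of "2 * x"] assms by simp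
      then have "((\<lambda>n. (2 * x) ^ n) has_sum (1 / (1 - 2 * x))) UNIV"
        by (rule sums_nonneg_imp_has_sum) (use assms in simp)
      then show "(\<lambda>n. (2 * x) ^ n) summable_on UNIV" by (rule has_sum_imp_summable)
    next
      fix n :: nat
      have "real (Suc n) \<le> 2 ^ n"
      proof -
        have "Suc n \<le> 2 ^ n" by (rule Suc_leI[OF less_exp])
        then have "real (Suc n) \<le> real (2 ^ n)" by (rule of_nat_mono)
        then show ?thesis by simp
      qed
      then have "real (Suc n) * x ^ n \<le> 2 ^ n * x ^ n" by (rule mult_right_mono) (use assms in simp)
      then show "real (Suc n) * x ^ n \<le> (2 * x) ^ n" by (simp add: power_mult_distrib)
      show "0 \<le> real (Suc n) * x ^ n" using assms by simp
    qed
  qed (use assms in auto)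
  then show ?thesis by simp
qed

context Wsetup begin

lemma double_sum:
  fixes \<rho> y :: complex
  defines "K \<equiv> 2 * (norm l + norm p + norm q + 1)"
  assumes \<rho>: "norm \<rho> \<le> 2" and y: "y \<in> ball 0 R" and small: "4 * K * norm y < 1"
  shows "(\<lambda>n. \<Sum>j\<le>n. Dc l p q j n * \<rho> ^ j * y ^ n / fact n) sums ((1 + \<rho> * (W y - 1)) powr p * W y powr q)"
proof -
  define f where "f = (\<lambda>(n::nat, j::nat). Dc l p q j n * \<rho> ^ j * y ^ n / fact n)"
  define x where "x = 2 * K * norm y"
  have K0: "K \<ge> 0" unfolding K_def by (simp add: add_nonneg_nonneg)
  have x0: "0 \<le> x" "2 * x < 1" using small K0 by (auto simp: x_def)
  define g where "g = (\<lambda>(n::nat, j::nat). if j \<le> n then x ^ n else 0)"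
  have gs: "g summable_on UNIV" unfolding g_def by (rule geom_row_summable[OF x0])
  have gabs: "(\<lambda>z. norm (g z)) summable_on UNIV"
    using gs by (rule summable_on_comparison_test) (auto simp: g_def x0)
  have bound: "norm (f nj) \<le> norm (g nj)" for nj
  proof (cases nj)
    case (Pair n j)
    show ?thesis
    proof (cases "j \<le> n")
      case False then show ?thesis by (simp add: Pair f_def g_def Dc_zero)
    next
      case True
      have "norm (f nj) = norm (Dc l p q j n) * norm \<rho> ^ j * norm y ^ n / fact n"
        by (simp add: Pair f_def norm_mult norm_divide norm_power)
      also have "\<dots> \<le> (K ^ n * fact n) * 2 ^ n * norm y ^ n / fact n"
      proof -
        have "norm \<rho> ^ j \<le> 2 ^ j" using \<rho> by (simp add: power_mono)
        also have "(2::real) ^ j \<le> 2 ^ n" using True by (simp add: power_increasing)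
        finally have r: "norm \<rho> ^ j \<le> 2 ^ n" .
        have "norm (Dc l p q j n) * norm \<rho> ^ j * norm y ^ n \<le> (K ^ n * fact n) * 2 ^ n * norm y ^ n"
          by (intro mult_right_mono mult_mono r) (use Dc_bound[of l p q j n] in \<open>auto simp: K_def\<close>)
        then show ?thesis by (rule divide_right_mono) simp
      qed
      also have "\<dots> = x ^ n" by (simp add: x_def power_mult_distrib)
      also have "\<dots> = norm (g nj)" using True x0 by (simp add: Pair g_def)
      finally show ?thesis .
    qed
  qed
  have fabs: "(\<lambda>z. norm (f z)) summable_on UNIV"
    by (rule summable_on_comparison_test[OF gabs]) (use bound in auto)
  have fs: "f summable_on UNIV" by (rule abs_summable_summable[OF fabs])
  then obtain S where hS: "(f has_sum S) UNIV" by (auto simp: summable_on_def)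
  have rows: "((\<lambda>j. f (n, j)) has_sum (\<Sum>j\<le>n. Dc l p q j n * \<rho> ^ j * y ^ n / fact n)) UNIV" for n
    by (rule has_sum_finite_neutralI[where B = "{..n}"]) (auto simp: f_def Dc_zero)
  have "((\<lambda>n. \<Sum>j\<le>n. Dc l p q j n * \<rho> ^ j * y ^ n / fact n) has_sum S) UNIV"
    by (rule has_sum_Sigma'[where B = "\<lambda>_. UNIV"]) (use hS rows in auto)
  then have sum1: "(\<lambda>n. \<Sum>j\<le>n. Dc l p q j n * \<rho> ^ j * y ^ n / fact n) sums S"
    by (rule has_sum_imp_sums)
  define f' where "f' = (\<lambda>(j, n). f (n, j))"
  have hS': "(f' has_sum S) (UNIV \<times> UNIV)" using hS has_sum_swap[of f UNIV UNIV S] by (simp add: f'_def)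
  have cols: "((\<lambda>n. f' (j, n)) has_sum (\<rho> ^ j * Ej p q W j y)) UNIV" for j
  proof -
    have "(\<lambda>(a, b). f' (a, b)) summable_on Sigma UNIV (\<lambda>_. UNIV)"
      using hS' by (auto simp: summable_on_def)
    then have "(\<lambda>n. f' (j, n)) summable_on UNIV"
      using summable_on_SigmaD1[of "\<lambda>a b. f' (a, b)" UNIV "\<lambda>_. UNIV" j] by simp
    then obtain V where V: "((\<lambda>n. f' (j, n)) has_sum V) UNIV" by (auto simp: summable_on_def)
    then have "(\<lambda>n. f' (j, n)) sums V" by (rule has_sum_imp_sums)
    moreover have "(\<lambda>n. f' (j, n)) sums (\<rho> ^ j * Ej p q W j y)"
      using sums_mult[OF Ej_sums[OF y, of j], of "\<rho> ^ j"] by (simp add: f'_def f_def algebra_simps)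
    ultimately have "V = \<rho> ^ j * Ej p q W j y" by (rule sums_unique2)
    with V show ?thesis by simp
  qed
  have "((\<lambda>j. \<rho> ^ j * Ej p q W j y) has_sum S) UNIV"
    by (rule has_sum_Sigma'[where B = "\<lambda>_. UNIV"]) (use hS' cols in auto)
  then have sum2: "(\<lambda>j. \<rho> ^ j * Ej p q W j y) sums S" by (rule has_sum_imp_sums)
  have nW: "norm (\<rho> * (W y - 1)) < 1"
  proof -
    have "norm (\<rho> * (W y - 1)) = norm \<rho> * norm (W y - 1)" by (simp add: norm_mult)
    also have "\<dots> \<le> 2 * norm (W y - 1)" using \<rho> by (simp add: mult_right_mono)
    also have "\<dots> < 1" using near[OF y] by simp
    finally show ?thesis .
  qed
  have "(\<lambda>j. (p gchoose j) * (\<rho> * (W y - 1)) ^ j * W y powr q) sums ((1 + \<rho> * (W y - 1)) powr p * W y powr q)"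
    using sums_mult2[OF gen_binomial_complex[OF nW, of p], of "W y powr q"] .
  moreover have "(\<lambda>j. (p gchoose j) * (\<rho> * (W y - 1)) ^ j * W y powr q) = (\<lambda>j. \<rho> ^ j * Ej p q W j y)"
    by (auto simp: Ej_def power_mult_distrib mult_ac)
  ultimately have "S = (1 + \<rho> * (W y - 1)) powr p * W y powr q"
    using sum2 by (metis sums_unique2)
  with sum1 show ?thesis by simp
qed

end

lemma Wsetup_intro:
  assumes R0: "R0 > 0" and holo: "W holomorphic_on ball 0 R0" and W0: "W 0 = 1"
    and ode: "\<And>y. y \<in> ball 0 R0 \<Longrightarrow> (1 - l * y) * deriv W y = - W y"
  shows "\<exists>R. Wsetup l W R"
proof -
  have "continuous (at 0) W"
    by (rule continuous_on_interior[OF holomorphic_on_imp_continuous_on[OF holo]]) (use R0 in auto)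
  then obtain d where d: "d > 0" "\<And>y. dist y 0 < d \<Longrightarrow> dist (W y) (W 0) < 1/2"
    unfolding continuous_at_eps_delta by (meson half_gt_zero less_numeral_extra(1))
  define R where "R = min R0 d"
  have "Wsetup l W R"
  proof
    show "R > 0" using R0 d by (simp add: R_def)
    show "W holomorphic_on ball 0 R" by (rule holomorphic_on_subset[OF holo]) (auto simp: R_def)
    show "W 0 = 1" by (rule W0)
    fix y :: complex assume y: "y \<in> ball 0 R"
    then show "norm (W y - 1) < 1/2" using d(2)[of y] W0 by (auto simp: R_def dist_norm)
    show "(1 - l * y) * deriv W y = - W y" using y by (intro ode) (auto simp: R_def)
  qed
  then show ?thesis by blast
qed

lemma rho_pow:
  fixes b s z :: complex
  assumes "s \<noteq> 0" "j \<le> n"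
  shows "(b / s) ^ j * (z * s) ^ n = b ^ j * s ^ (n - j) * z ^ n"
proof -
  have "s ^ n = s ^ j * s ^ (n - j)" using assms(2) by (simp flip: power_add)
  then have "(b / s) ^ j * (z * s) ^ n = ((b / s) ^ j * s ^ j) * s ^ (n - j) * z ^ n"
    by (simp add: power_mult_distrib mult_ac)
  also have "(b / s) ^ j * s ^ j = b ^ j" using assms(1) by (simp add: power_divide)
  finally show ?thesis .
qed

lemma main_general:
  fixes a b c a' b' c' :: complex and W :: "complex \<Rightarrow> complex" and R :: real
  assumes bb: "b * b' \<noteq> 0" and rel: "a / b = a' / b' + 1"
    and WS: "Wsetup (a/b) W R"
  shows "\<exists>e>0. \<forall>t z. cmod t < e \<and> cmod z < e \<longrightarrow> b + b' * t \<noteq> 0 \<and> z * (b + b' * t) \<in> ball 0 R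
     \<and> norm (b / (b + b' * t)) \<le> 2
     \<and> gkp_egf_term a b c a' b' c' t z sums
         ((1 + b / (b + b' * t) * (W (z * (b + b' * t)) - 1)) powr (c'/b' - c/b) * W (z * (b + b' * t)) powr (- c'/b'))"
proof -
  interpret Wsetup "a/b" "c'/b' - c/b" "- c'/b'" W R by (rule WS)
  define l p q where "l = a/b" and "p = c'/b' - c/b" and "q = - c'/b'"
  define K where "K = 2 * (norm l + norm p + norm q + 1)"
  have K1: "K \<ge> 2" by (simp add: K_def)
  define R' where "R' = min R (1 / (4 * K))"
  have R'0: "R' > 0" using R K1 by (simp add: R'_def)
  have b0: "b \<noteq> 0" and b'0: "b' \<noteq> 0" using bb by auto
  define e where "e = min (norm b / (2 * norm b')) (R' / (2 * norm b))"
  have e0: "e > 0" using b0 b'0 R'0 by (simp add: e_def)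
  have "b + b' * t \<noteq> 0 \<and> z * (b + b' * t) \<in> ball 0 R \<and> norm (b / (b + b' * t)) \<le> 2
     \<and> gkp_egf_term a b c a' b' c' t z sums
         ((1 + b / (b + b' * t) * (W (z * (b + b' * t)) - 1)) powr (c'/b' - c/b) * W (z * (b + b' * t)) powr (- c'/b'))"
    if t: "cmod t < e" and z: "cmod z < e" for t z
  proof -
    define s where "s = b + b' * t"
    define y where "y = z * s"
    define \<rho> where "\<rho> = b / s"
    have nb'0: "norm b' > 0" using b'0 by simp
    have "norm (b' * t) = norm b' * norm t" by (simp add: norm_mult)
    also have "\<dots> < norm b' * (norm b / (2 * norm b'))"
      using t nb'0 by (intro mult_strict_left_mono) (auto simp: e_def)
    also have "\<dots> = norm b / 2" using nb'0 by simp
    finally have bt: "norm (b' * t) < norm b / 2" .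
    have "norm b \<le> norm s + norm (b' * t)"
      using norm_triangle_ineq4[of s "b' * t"] by (simp add: s_def)
    then have slow: "norm s > norm b / 2" using bt by linarith
    have "norm s \<le> norm b + norm (b' * t)" unfolding s_def by (rule norm_triangle_ineq)
    then have shigh: "norm s \<le> 3 / 2 * norm b" using bt by linarith
    have nb0: "norm b > 0" using b0 by simp
    have s0: "s \<noteq> 0" using slow nb0 by auto
    have rho2: "norm \<rho> \<le> 2"
    proof -
      have "norm \<rho> = norm b / norm s" by (simp add: \<rho>_def norm_divide)
      also have "\<dots> \<le> 2" using slow nb0 by (simp add: divide_le_eq)
      finally show ?thesis .
    qed
    have "norm y = norm z * norm s" by (simp add: y_def norm_mult)
    also have "\<dots> \<le> norm z * (3 / 2 * norm b)" by (rule mult_left_mono[OF shigh]) simp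
    also have "\<dots> < R' / (2 * norm b) * (3 / 2 * norm b)"
      using z nb0 by (intro mult_strict_right_mono) (auto simp: e_def)
    also have "\<dots> = 3 / 4 * R'" using nb0 by simp
    finally have ylt: "norm y < 3 / 4 * R'" .
    have "R' \<le> R" by (simp add: R'_def)
    then have yR: "y \<in> ball 0 R" using ylt R'0 by simp
    have "R' \<le> 1 / (4 * K)" by (simp add: R'_def)
    then have "norm y < 1 / (4 * K)" using ylt R'0 by simp
    then have small: "4 * K * norm y < 1" using K1 by (simp add: field_simps)
    have ds: "(\<lambda>n. \<Sum>j\<le>n. Dc l p q j n * \<rho> ^ j * y ^ n / fact n) sums ((1 + \<rho> * (W y - 1)) powr p * W y powr q)"
      using double_sum[OF rho2 yR] small unfolding K_def l_def p_def q_def by simp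
    have eq: "gkp_egf_term a b c a' b' c' t z n = (\<Sum>j\<le>n. Dc l p q j n * \<rho> ^ j * y ^ n / fact n)" for n
    proof -
      have "gkp_egf_term a b c a' b' c' t z n = Pn a b c a' b' c' n t * z ^ n / fact n"
        by (simp add: gkp_egf_term_def Pn_def)
      also have "\<dots> = Qn l p q b b' n t * z ^ n / fact n"
        using Pn_Qn[OF bb rel] by (simp add: l_def p_def q_def)
      also have "\<dots> = (\<Sum>j\<le>n. Dc l p q j n * (b ^ j * s ^ (n - j) * z ^ n) / fact n)"
        by (simp add: Qn_def sum_distrib_left sum_divide_distrib s_def mult_ac)
      also have "\<dots> = (\<Sum>j\<le>n. Dc l p q j n * \<rho> ^ j * y ^ n / fact n)"
        by (intro sum.cong refl) (simp add: rho_pow[OF s0] \<rho>_def y_def mult.assoc)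
      finally show ?thesis .
    qed
    have E: "gkp_egf_term a b c a' b' c' t z = (\<lambda>n. \<Sum>j\<le>n. Dc l p q j n * \<rho> ^ j * y ^ n / fact n)"
      using eq by (intro ext)
    have fin: "gkp_egf_term a b c a' b' c' t z sums ((1 + \<rho> * (W y - 1)) powr p * W y powr q)"
      using ds unfolding E .
    show ?thesis unfolding s_def[symmetric] y_def[symmetric] \<rho>_def[symmetric] p_def[symmetric] q_def[symmetric]
      using fin s0 yR rho2 by blast
  qed
  with e0 show ?thesis by blast
qed

lemma cpowr_minus: "(x::complex) powr (- e) = inverse (x powr e)"
  by (simp add: powr_def exp_minus)

lemma cpowr_add: "(x::complex) powr a * x powr b = x powr (a + b)"
  by (simp add: powr_def exp_add distrib_right)

lemma re_pos_near: "norm ((x::complex) - 1) < 1 \<Longrightarrow> Re x > 0"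
proof -
  assume "norm (x - 1) < 1"
  moreover have "abs (Re (x - 1)) \<le> norm (x - 1)" by (rule abs_Re_le_cmod)
  ultimately show ?thesis by simp
qed

lemma powr_times_inverse:
  fixes x w e :: complex
  assumes "Re x > 0" "Re w > 0"
  shows "(x * inverse w) powr e = x powr e * w powr (- e)"
proof -
  have x0: "x \<noteq> 0" and w0: "w \<noteq> 0" using assms by auto
  have wn: "w \<notin> \<real>\<^sub>\<le>\<^sub>0" using assms(2) by (auto simp: complex_nonpos_Reals_iff)
  have i1: "\<bar>Im (Ln x)\<bar> < pi / 2" using Re_Ln_pos_lt[OF x0] assms(1) by simp
  have i2: "\<bar>Im (Ln w)\<bar> < pi / 2" using Re_Ln_pos_lt[OF w0] assms(2) by simp
  have li: "Ln (inverse w) = - Ln w" by (rule Ln_inverse[OF wn])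
  have "Ln (x * inverse w) = Ln x + Ln (inverse w)"
    by (rule Ln_times_simple) (use x0 w0 i1 i2 li in auto)
  then have L: "Ln (x * inverse w) = Ln x - Ln w" using li by simp
  have "(x * inverse w) powr e = exp (e * Ln (x * inverse w))" using x0 w0 by (simp add: powr_def)
  also have "\<dots> = exp (e * Ln x + (- e) * Ln w)" unfolding L by (simp add: algebra_simps)
  also have "\<dots> = exp (e * Ln x) * exp ((- e) * Ln w)" by (rule exp_add)
  also have "\<dots> = x powr e * w powr (- e)" using x0 w0 by (simp add: powr_def)
  finally show ?thesis .
qed

lemma final_rewrite:
  fixes b b' t w c c' :: complex
  assumes s: "b + b' * t \<noteq> 0" and w: "norm (w - 1) < 1/2" and r: "norm (b / (b + b' * t)) \<le> 2"
  shows "(1 - b / (b + b' * t) * (1 - w)) powr (- c / b)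
         * (1 - (b' * t / (b + b' * t)) * (1 - inverse w)) powr (c' / b')
       = (1 + b / (b + b' * t) * (w - 1)) powr (c'/b' - c/b) * w powr (- c'/b')"
proof -
  define \<rho> where "\<rho> = b / (b + b' * t)"
  define X where "X = 1 + \<rho> * (w - 1)"
  have w0: "w \<noteq> 0" using w by (auto)
  have "norm (X - 1) = norm \<rho> * norm (w - 1)" by (simp add: X_def norm_mult)
  also have "\<dots> \<le> 2 * norm (w - 1)" using r by (simp add: \<rho>_def mult_right_mono)
  also have "\<dots> < 1" using w by simp
  finally have X1: "norm (X - 1) < 1" .
  have ReX: "Re X > 0" by (rule re_pos_near[OF X1])
  have Rew: "Re w > 0" by (rule re_pos_near) (use w in simp)
  have e1: "1 - \<rho> * (1 - w) = X" unfolding X_def by (simp add: algebra_simps)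
  have h: "b' * t / (b + b' * t) = 1 - \<rho>" using s by (simp add: \<rho>_def field_simps)
  have e2: "1 - (b' * t / (b + b' * t)) * (1 - inverse w) = X * inverse w"
    unfolding h X_def using w0 by (simp add: field_simps)
  have "X powr (- c / b) * (X * inverse w) powr (c' / b') = X powr (- c / b) * (X powr (c' / b') * w powr (- (c' / b')))"
    by (simp add: powr_times_inverse[OF ReX Rew])
  also have "\<dots> = X powr (c'/b' - c/b) * w powr (- c'/b')"
    by (simp add: mult.assoc[symmetric] cpowr_add)
  finally show ?thesis unfolding \<rho>_def[symmetric] e1 e2 X_def .
qed

lemma Wsetup_powr:
  fixes a b :: complex
  assumes a: "a \<noteq> 0" and b: "b \<noteq> 0"
  shows "\<exists>R. Wsetup (a/b) (\<lambda>y. (1 - a/b * y) powr (b/a)) R"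
proof -
  define l where "l = a/b"
  have l0: "l \<noteq> 0" using a b by (simp add: l_def)
  define R0 where "R0 = 1 / (2 * norm l)"
  have R0: "R0 > 0" using l0 by (simp add: R0_def)
  have nn: "1 - l * y \<notin> \<real>\<^sub>\<le>\<^sub>0" if "y \<in> ball 0 R0" for y
  proof (rule near1_not_nonpos)
    have "norm (l * y) = norm l * norm y" by (simp add: norm_mult)
    also have "\<dots> < norm l * R0" using that l0 by (intro mult_strict_left_mono) auto
    also have "\<dots> = 1/2" using l0 by (simp add: R0_def)
    finally show "norm (1 - l * y - 1) < 1/2" by simp
  qed
  have holo: "(\<lambda>y. (1 - l * y) powr (b/a)) holomorphic_on ball 0 R0"
    by (intro holomorphic_intros) (use nn in auto)
  have ode: "(1 - l * y) * deriv (\<lambda>y. (1 - l * y) powr (b/a)) y = - ((1 - l * y) powr (b/a))"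
    if y: "y \<in> ball 0 R0" for y
  proof -
    have d: "((\<lambda>y. (1 - l * y) powr (b/a)) has_field_derivative (b/a * (1 - l * y) powr (b/a - 1) * (- l))) (at y)"
    proof -
      have dg: "((\<lambda>y. 1 - l * y) has_field_derivative (- l)) (at y)"
        by (auto intro!: derivative_eq_intros)
      show ?thesis
        using DERIV_chain2[where f="\<lambda>z. z powr (b/a)" and g="\<lambda>y. 1 - l * y",
          OF has_field_derivative_powr[OF nn[OF y]] dg] by simp
    qed
    have ne: "1 - l * y \<noteq> 0" using nn[OF y] by auto
    have bl: "b / a * l = 1" using a b by (simp add: l_def)
    have "(1 - l * y) * deriv (\<lambda>y. (1 - l * y) powr (b/a)) y
        = - (b / a * l) * ((1 - l * y) powr (b/a - 1) * (1 - l * y))"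
      unfolding DERIV_imp_deriv[OF d] by (simp add: mult_ac)
    also have "\<dots> = - ((1 - l * y) powr (b/a))" using powr_pred_mult[OF ne] bl by simp
    finally show ?thesis .
  qed
  show ?thesis using Wsetup_intro[OF R0 holo _ ode] unfolding l_def by simp
qed

lemma Wsetup_exp: "\<exists>R. Wsetup 0 (\<lambda>y. exp (- y)) R"
proof (rule Wsetup_intro[of 1])
  fix y :: complex
  have "((\<lambda>y. exp (- y)) has_field_derivative (- exp (- y))) (at y)"
    by (auto intro!: derivative_eq_intros)
  then show "(1 - 0 * y) * deriv (\<lambda>y. exp (- y)) y = - exp (- y)"
    by (simp add: DERIV_imp_deriv)
qed (auto intro!: holomorphic_intros)

theorem mainTheorem7:
  fixes a b c a' b' c' :: complex
  assumes "b * b' \<noteq> 0"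
    and "a / b = a' / b' + 1"
  shows "\<exists>e>0. \<forall>t z. cmod t < e \<and> cmod z < e \<longrightarrow>
     (let \<rho> = b / (b + b' * t) in
      (a \<noteq> 0 \<longrightarrow>
        gkp_egf_term a b c a' b' c' t z sums
          ((1 - \<rho> * (1 - (1 - a * z / \<rho>) powr (b / a))) powr (- c / b)
         * (1 - (b' * t / (b + b' * t)) * (1 - (1 - a * z / \<rho>) powr (- b / a))) powr (c' / b')))
    \<and> (a = 0 \<longrightarrow>
        gkp_egf_term a b c a' b' c' t z sums
          ((1 - \<rho> * (1 - exp (- z * (b + b' * t)))) powr (- c / b)
         * (1 - (b' * t / (b + b' * t)) * (1 - exp (z * (b + b' * t)))) powr (c' / b'))))"
proof (cases "a = 0")
  case False
  have b0: "b \<noteq> 0" using assms(1) by auto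
  define W where "W = (\<lambda>y. (1 - a/b * y) powr (b/a))"
  obtain R where WS: "Wsetup (a/b) W R" using Wsetup_powr[OF False b0] unfolding W_def by blast
  obtain e where e: "e > 0" and H: "\<And>t z. cmod t < e \<Longrightarrow> cmod z < e \<Longrightarrow> b + b' * t \<noteq> 0 \<and> z * (b + b' * t) \<in> ball 0 R
     \<and> norm (b / (b + b' * t)) \<le> 2
     \<and> gkp_egf_term a b c a' b' c' t z sums
         ((1 + b / (b + b' * t) * (W (z * (b + b' * t)) - 1)) powr (c'/b' - c/b) * W (z * (b + b' * t)) powr (- c'/b'))"
    using main_general[OF assms WS] by blast
  show ?thesis
  proof (intro exI[of _ e] conjI allI impI e)
    fix t z assume tz: "cmod t < e \<and> cmod z < e"
    note h = H[OF conjunct1[OF tz] conjunct2[OF tz]]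
    define s where "s = b + b' * t"
    have s0: "s \<noteq> 0" using h by (simp add: s_def)
    have near: "norm (W (z * s) - 1) < 1/2"
      using Wsetup.near[OF WS] h by (simp add: s_def)
    have eq1: "1 - a * z / (b / s) = 1 - a / b * (z * s)" using s0 b0 by (simp add: field_simps)
    have p1: "(1 - a * z / (b / s)) powr (b / a) = W (z * s)" unfolding eq1 W_def ..
    have p2: "(1 - a * z / (b / s)) powr (- b / a) = inverse (W (z * s))"
      unfolding eq1 W_def by (simp add: cpowr_minus[symmetric])
    have fin: "gkp_egf_term a b c a' b' c' t z sums
          ((1 - b / s * (1 - W (z * s))) powr (- c / b)
         * (1 - (b' * t / s) * (1 - inverse (W (z * s)))) powr (c' / b'))"
      using final_rewrite[of b b' t "W (z * s)" c c'] near h unfolding s_def by simp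
    have "gkp_egf_term a b c a' b' c' t z sums
          ((1 - b / s * (1 - (1 - a * z / (b / s)) powr (b / a))) powr (- c / b)
         * (1 - (b' * t / s) * (1 - (1 - a * z / (b / s)) powr (- b / a))) powr (c' / b'))"
      unfolding p1 p2 by (rule fin)
    then show "let \<rho> = b / (b + b' * t) in
      (a \<noteq> 0 \<longrightarrow>
        gkp_egf_term a b c a' b' c' t z sums
          ((1 - \<rho> * (1 - (1 - a * z / \<rho>) powr (b / a))) powr (- c / b)
         * (1 - (b' * t / (b + b' * t)) * (1 - (1 - a * z / \<rho>) powr (- b / a))) powr (c' / b')))
    \<and> (a = 0 \<longrightarrow>
        gkp_egf_term a b c a' b' c' t z sums
          ((1 - \<rho> * (1 - exp (- z * (b + b' * t)))) powr (- c / b)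
         * (1 - (b' * t / (b + b' * t)) * (1 - exp (z * (b + b' * t)))) powr (c' / b')))"
      using False by (simp add: Let_def s_def)
  qed
next
  case True
  define W where "W = (\<lambda>y::complex. exp (- y))"
  obtain R where WS: "Wsetup (a/b) W R" using Wsetup_exp unfolding W_def True by auto
  obtain e where e: "e > 0" and H: "\<And>t z. cmod t < e \<Longrightarrow> cmod z < e \<Longrightarrow> b + b' * t \<noteq> 0 \<and> z * (b + b' * t) \<in> ball 0 R
     \<and> norm (b / (b + b' * t)) \<le> 2
     \<and> gkp_egf_term a b c a' b' c' t z sums
         ((1 + b / (b + b' * t) * (W (z * (b + b' * t)) - 1)) powr (c'/b' - c/b) * W (z * (b + b' * t)) powr (- c'/b'))"
    using main_general[OF assms WS] by blast
  show ?thesis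
  proof (intro exI[of _ e] conjI allI impI e)
    fix t z assume tz: "cmod t < e \<and> cmod z < e"
    note h = H[OF conjunct1[OF tz] conjunct2[OF tz]]
    have near: "norm (W (z * (b + b' * t)) - 1) < 1/2"
      using Wsetup.near[OF WS] h by simp
    have p1: "exp (- z * (b + b' * t)) = W (z * (b + b' * t))" by (simp add: W_def)
    have p2: "exp (z * (b + b' * t)) = inverse (W (z * (b + b' * t)))" by (simp add: W_def exp_minus)
    have "gkp_egf_term a b c a' b' c' t z sums
          ((1 - b / (b + b' * t) * (1 - exp (- z * (b + b' * t)))) powr (- c / b)
         * (1 - (b' * t / (b + b' * t)) * (1 - exp (z * (b + b' * t)))) powr (c' / b'))"
      unfolding p1 p2
      using final_rewrite[of b b' t "W (z * (b + b' * t))" c c'] near h by simp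
    then show "let \<rho> = b / (b + b' * t) in
      (a \<noteq> 0 \<longrightarrow>
        gkp_egf_term a b c a' b' c' t z sums
          ((1 - \<rho> * (1 - (1 - a * z / \<rho>) powr (b / a))) powr (- c / b)
         * (1 - (b' * t / (b + b' * t)) * (1 - (1 - a * z / \<rho>) powr (- b / a))) powr (c' / b')))
    \<and> (a = 0 \<longrightarrow>
        gkp_egf_term a b c a' b' c' t z sums
          ((1 - \<rho> * (1 - exp (- z * (b + b' * t)))) powr (- c / b)
         * (1 - (b' * t / (b + b' * t)) * (1 - exp (z * (b + b' * t)))) powr (c' / b')))"
      using True by (simp add: Let_def)
  qed
qed

end
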